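(* Let $x$ be a fixed real (or complex) number and let $\kappa_x:\mathbb{Z}_{>0}\to\mathbb{C}$ be the recursive divisor function defined by $$\kappa_x(n) = n^x + \sum_{d \mid n,\ d<n} \kappa_x(d)\qquad (n\ge 1).$$ Then, as an identity of Dirichlet series in $s$ (in particular for all complex $s$ with real part sufficiently large that both sides converge absolutely), $$\sum_{n=1}^\infty \frac{\kappa_x(n)}{n^s} = \frac{\zeta(s-x)}{2-\zeta(s)},$$ where $\zeta$ is the Riemann zeta function.
   Context: For $n=1$ the sum over $d\mid n$, $d<n$ is empty, so $\kappa_x(1)=1$. $\zeta(s)=\sum_{n\ge1} n^{-s}$. *)

theory Defs
  imports "HOL-Analysis.Analysis"
begin

text \<open>For n \<ge> 1, d ranges over {..<n} with d dvd n; d = 0 never divides n \<ge> 1.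
  The value at n = 0 is irrelevant (it is 0).\<close>
function kappa :: "complex \<Rightarrow> nat \<Rightarrow> complex" where
  "kappa x n = (if n = 0 then 0
     else of_nat n powr x + (\<Sum>d<n. if d dvd n then kappa x d else 0))"
  by auto
termination by (relation "Wellfounded.measure snd") auto

text \<open>Riemann zeta function via its Dirichlet series (valid for Re s > 1, which is the
  only region used below).\<close>
definition zeta :: "complex \<Rightarrow> complex" where
  "zeta s = (\<Sum>n. 1 / of_nat (Suc n) powr s)"

end

theory Submission
  imports Defs
begin
declare kappa.simps[simp del]

lemma kappa_eq: "n > 0 \<Longrightarrow> kappa x n = of_nat n powr x + (\<Sum>d\<in>{d\<in>{..<n}. d dvd n}. kappa x d)"
  by (subst sum.inter_filter, simp, subst kappa.simps, simp)

lemma kappa_1: "kappa x 1 = 1"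
  by (subst kappa.simps) simp

lemma norm_nat_powr: "n > 0 \<Longrightarrow> norm ((of_nat n::complex) powr s) = real n powr Re s"
  using norm_powr_real_powr[of "of_nat n" s] by simp

lemma nat_powr_mult: "(of_nat (d*m)::complex) powr s = of_nat d powr s * of_nat m powr s"
  by (simp add: powr_times_real)

lemma tele: "N \<ge> 1 \<Longrightarrow> (\<Sum>k\<in>{2..N}. 1/(real k*(real k - 1))) = 1 - 1/real N"
proof (induction N rule: nat_induct_at_least)
  case base then show ?case by simp
next
  case (Suc N)
  have "{2..Suc N} = insert (Suc N) {2..N}" using Suc by auto
  then have "(\<Sum>k\<in>{2..Suc N}. 1/(real k*(real k - 1))) = 1/(real (Suc N) * real N) + (1 - 1/real N)"
    using Suc by simp
  also have "\<dots> = 1 - 1/real (Suc N)"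
  proof -
    have "real N > 0" using Suc.hyps by simp
    moreover have "real N + real N * real N > 0" using \<open>real N > 0\<close> by (simp add: add_pos_pos)
    ultimately show ?thesis by (simp add: field_simps)
  qed
  finally show ?case .
qed

lemma tail_bound: assumes "A \<ge> 3" shows "(\<Sum>k\<in>{2..N}. real k powr (-A)) \<le> 1/2"
proof -
  have each: "real k powr (-A) \<le> 1/2 * (1/(real k*(real k - 1)))" if "k \<in> {2..N}" for k
  proof -
    have k2: "real k \<ge> 2" using that by auto
    have "real k powr 3 \<le> real k powr A" using k2 assms by (intro powr_mono) auto
    moreover have "real k powr 3 = real k ^ 3" using k2 by (simp add: powr_realpow)
    moreover have "2 * (real k * (real k - 1)) \<le> real k ^ 3"
    proof -
      have "0 \<le> (real k - 1)^2" by simp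
      then have h: "2 * (real k - 1) \<le> real k * real k" by (simp add: power2_eq_square algebra_simps)
      have "real k * (2 * (real k - 1)) \<le> real k * (real k * real k)"
        using k2 by (intro mult_left_mono h) auto
      then show ?thesis by (simp add: power3_eq_cube algebra_simps)
    qed
    ultimately have le: "2 * (real k * (real k - 1)) \<le> real k powr A" by linarith
    have "real k powr (-A) = 1 / real k powr A" by (simp add: powr_minus_divide)
    have pos: "real k * (real k - 1) > 0" using k2 by simp
    have kp: "real k powr A > 0" using k2 by simp
    have "1 / real k powr A \<le> 1 / (2 * (real k * (real k - 1)))"
      by (rule divide_left_mono[OF le]) (use pos kp in \<open>auto intro!: mult_pos_pos\<close>)
    then show ?thesis using \<open>real k powr (-A) = 1 / real k powr A\<close> by simp
  qed
  have "(\<Sum>k\<in>{2..N}. real k powr (-A)) \<le> (\<Sum>k\<in>{2..N}. 1/2 * (1/(real k*(real k - 1))))"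
    by (intro sum_mono each)
  also have "\<dots> \<le> 1/2"
  proof (cases "N = 0")
    case True then show ?thesis by simp
  next
    case False
    then have "(\<Sum>k\<in>{2..N}. 1/2 * (1/(real k*(real k - 1)))) = 1/2 * (1 - 1/real N)"
    proof -
      have "(\<Sum>k\<in>{2..N}. 1/2 * (1/(real k*(real k - 1)))) = 1/2 * (\<Sum>k\<in>{2..N}. 1/(real k*(real k - 1)))"
        by (simp only: sum_distrib_left)
      also have "\<dots> = 1/2 * (1 - 1/real N)" using False by (simp only: tele[of N])
      finally show ?thesis .
    qed
    then show ?thesis by simp
  qed
  finally show ?thesis .
qed

lemma div_div_self_nat: "d dvd (n::nat) \<Longrightarrow> n > 0 \<Longrightarrow> n div (n div d) = d"
  by (auto elim!: dvdE)

lemma kappa_bound: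
  assumes A3: "A \<ge> 3" and Ax: "A \<ge> Re x + 1" and "n > 0"
  shows "norm (kappa x n) \<le> real n powr A"
  using \<open>n > 0\<close>
proof (induction n rule: less_induct)
  case (less n)
  show ?case
  proof (cases "n = 1")
    case True then show ?thesis using kappa_1[of x] by simp
  next
    case False
    with less.prems have n2: "n \<ge> 2" by simp
    define D where "D = {d\<in>{..<n}. d dvd n}"
    have Dpos: "d > 0" "d < n" "d dvd n" if "d \<in> D" for d
      using that less.prems unfolding D_def by (auto intro: Nat.gr0I)
    have e1: "norm (kappa x n) \<le> norm ((of_nat n::complex) powr x) + norm (\<Sum>d\<in>D. kappa x d)"
      unfolding D_def using kappa_eq[OF less.prems, of x] by (simp add: norm_triangle_ineq)
    have e2: "norm (\<Sum>d\<in>D. kappa x d) \<le> (\<Sum>d\<in>D. norm (kappa x d))" by (rule norm_sum)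
    have e3: "(\<Sum>d\<in>D. norm (kappa x d)) \<le> (\<Sum>d\<in>D. real d powr A)"
      by (intro sum_mono less.IH) (auto dest: Dpos)
    have e4: "(\<Sum>d\<in>D. real d powr A) = (\<Sum>d\<in>D. real n powr A * real (n div d) powr (-A))"
    proof (intro sum.cong refl)
      fix d assume d: "d \<in> D"
      have "real n = real d * real (n div d)" using Dpos[OF d] by (simp flip: of_nat_mult)
      then have "real n powr A = real d powr A * real (n div d) powr A" by (simp add: powr_mult)
      moreover have "real (n div d) > 0" using Dpos[OF d] less.prems
        by (auto elim!: dvdE)
      ultimately show "real d powr A = real n powr A * real (n div d) powr (-A)"
        by (simp add: powr_minus field_simps)
    qed
    have e5: "(\<Sum>d\<in>D. real n powr A * real (n div d) powr (-A)) = real n powr A * (\<Sum>k\<in>(\<lambda>d. n div d) ` D. real k powr (-A))"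
    proof -
      have "inj_on (\<lambda>d. n div d) D"
      proof (rule inj_onI)
        fix d1 d2 assume d1: "d1 \<in> D" and d2: "d2 \<in> D" and eq: "n div d1 = n div d2"
        show "d1 = d2"
        proof -
          have "d1 = n div (n div d1)" using div_div_self_nat[OF Dpos(3)[OF d1] less.prems] by simp
          also have "\<dots> = n div (n div d2)" by (simp only: eq)
          also have "\<dots> = d2" by (rule div_div_self_nat[OF Dpos(3)[OF d2] less.prems])
          finally show ?thesis .
        qed
      qed
      then show ?thesis by (simp add: sum.reindex sum_distrib_left)
    qed
    have e6: "real n powr A * (\<Sum>k\<in>(\<lambda>d. n div d) ` D. real k powr (-A)) \<le> real n powr A * (\<Sum>k\<in>{2..n}. real k powr (-A))"
    proof -
      have sub: "(\<lambda>d. n div d) ` D \<subseteq> {2..n}"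
      proof
        fix k assume "k \<in> (\<lambda>d. n div d) ` D"
        then obtain d where d: "d \<in> D" "k = n div d" by auto
        have "k \<le> n" using d by simp
        moreover have "n = d * k" using Dpos[OF d(1)] d(2) by simp
        then have "k \<ge> 2" using Dpos[OF d(1)]
          by (cases "k = 0"; cases "k = 1") auto
        ultimately show "k \<in> {2..n}" by simp
      qed
      have "(\<Sum>k\<in>(\<lambda>d. n div d) ` D. real k powr (-A)) \<le> (\<Sum>k\<in>{2..n}. real k powr (-A))"
        by (rule sum_mono2) (use sub in auto)
      then show ?thesis by (rule mult_left_mono) simp
    qed
    have e7: "real n powr A * (\<Sum>k\<in>{2..n}. real k powr (-A)) \<le> real n powr A * (1/2)"
      by (rule mult_left_mono[OF tail_bound[OF A3]]) simp
    have e8a: "norm ((of_nat n::complex) powr x) = real n powr Re x" using less.prems by (rule norm_nat_powr)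
    have e8: "real n powr Re x \<le> real n powr A / 2"
    proof -
      have "real n powr (A - Re x) \<ge> real n powr 1" using n2 Ax by (intro powr_mono) auto
      then have g2: "real n powr (A - Re x) \<ge> 2" using n2 by simp
      have eqA: "real n powr A = real n powr (A - Re x) * real n powr Re x"
        by (simp flip: powr_add)
      have g0: "real n powr Re x \<ge> 0" by simp
      have "2 * real n powr Re x \<le> real n powr (A - Re x) * real n powr Re x"
        by (rule mult_right_mono[OF g2 g0])
      then have "2 * real n powr Re x \<le> real n powr A" using eqA by simp
      then show ?thesis by simp
    qed
    show ?thesis using e1 e2 e3 e4 e5 e6 e7 e8a e8 by linarith
  qed
qed

lemma bij_Suc: "bij_betw Suc UNIV {0<..}"
  by (rule bij_betwI[where g = "\<lambda>n. n - 1"]) auto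

lemma has_sum_from_Suc:
  fixes g :: "nat \<Rightarrow> 'a::banach"
  assumes "summable (\<lambda>n. norm (g (Suc n)))"
  shows "(g has_sum (\<Sum>n. g (Suc n))) {0<..}"
proof -
  have "summable (\<lambda>n. g (Suc n))" using assms by (rule summable_norm_cancel)
  then have "((\<lambda>n. g (Suc n)) has_sum (\<Sum>n. g (Suc n))) UNIV"
    by (intro norm_summable_imp_has_sum assms summable_sums)
  then show ?thesis using has_sum_reindex_bij_betw[OF bij_Suc, of g] by simp
qed

lemma norm_inv_powr: "n > 0 \<Longrightarrow> norm (1 / (of_nat n::complex) powr s) = real n powr (- Re s)"
  by (simp add: norm_divide norm_nat_powr powr_minus_divide)

lemma summable_inv_powr:
  assumes "Re s > 1"
  shows "summable (\<lambda>n. norm (1 / (of_nat (Suc n)::complex) powr s))"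
proof -
  have "summable (\<lambda>n. real n powr (- Re s))" using assms by (subst summable_real_powr_iff) simp
  then have "summable (\<lambda>n. real (Suc n) powr (- Re s))" by (subst summable_Suc_iff)
  then show ?thesis by (subst norm_inv_powr) auto
qed

lemma zeta_has_sum: "Re s > 1 \<Longrightarrow> ((\<lambda>n. 1 / (of_nat n::complex) powr s) has_sum zeta s) {0<..}"
  unfolding zeta_def by (rule has_sum_from_Suc[OF summable_inv_powr])

lemma dirichlet_mult:
  fixes a :: "nat \<Rightarrow> complex"
  assumes asum: "summable (\<lambda>n. norm (a (Suc n)))" and s: "Re s > 1"
  shows "((\<lambda>n. \<Sum>d\<in>{d. d dvd n}. a d / of_nat (n div d) powr s) has_sum ((\<Sum>n. a (Suc n)) * zeta s)) {0<..}"
proof -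
  define P :: "nat set" where "P = {0<..}"
  define f where "f = (\<lambda>(d,m). a d * (1 / (of_nat m::complex) powr s))"
  define K where "K = (\<Sum>n. a (Suc n))"
  have aK: "(a has_sum K) P" unfolding K_def P_def by (rule has_sum_from_Suc[OF asum])
  have Z: "((\<lambda>m. 1 / (of_nat m::complex) powr s) has_sum zeta s) P"
    unfolding P_def by (rule zeta_has_sum[OF s])
  define Zr where "Zr = (\<Sum>n. norm (1 / (of_nat (Suc n)::complex) powr s))"
  have Zr: "((\<lambda>m. norm (1 / (of_nat m::complex) powr s)) has_sum Zr) P"
    unfolding P_def Zr_def using summable_inv_powr[OF s] by (intro has_sum_from_Suc) simp
  define Ka where "Ka = (\<Sum>n. norm (a (Suc n)))"
  have aKa: "((\<lambda>d. norm (a d)) has_sum Ka) P"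
    unfolding P_def Ka_def using asum by (intro has_sum_from_Suc) simp
  have fabs: "(\<lambda>z. norm (f z)) summable_on Sigma P (\<lambda>_. P)"
  proof (rule iffD2[OF Infinite_Sum.abs_summable_on_Sigma_iff], intro conjI ballI)
    fix d assume "d \<in> P"
    have "((\<lambda>m. norm (a d) * norm (1 / (of_nat m::complex) powr s)) has_sum (norm (a d) * Zr)) P"
      by (rule has_sum_cmult_right[OF Zr])
    then show "(\<lambda>m. norm (f (d, m))) summable_on P"
      unfolding f_def prod.case norm_mult summable_on_def by blast
  next
    have "infsum (\<lambda>m. norm (f (d, m))) P = norm (a d) * Zr" for d
      unfolding f_def prod.case norm_mult using has_sum_cmult_right[OF Zr, of "norm (a d)"]
      by (rule infsumI)
    moreover have "((\<lambda>d. norm (a d) * Zr) has_sum (Ka * Zr)) P"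
      by (rule has_sum_cmult_left[OF aKa])
    moreover have Zr0: "Zr \<ge> 0" unfolding Zr_def
      by (intro suminf_nonneg summable_inv_powr[OF s]) simp
    ultimately show "(\<lambda>d. norm (infsum (\<lambda>m. norm (f (d, m))) P)) summable_on P"
      by (auto simp: summable_on_def)
  qed
  then obtain T where T: "(f has_sum T) (Sigma P (\<lambda>_. P))"
    using abs_summable_summable by (auto simp: summable_on_def)
  have "((\<lambda>d. a d * zeta s) has_sum T) P"
  proof (rule has_sum_Sigma'[OF T])
    fix d assume "d \<in> P"
    show "((\<lambda>m. f (d, m)) has_sum a d * zeta s) P"
      unfolding f_def using has_sum_cmult_right[OF Z, of "a d"] by simp
  qed
  moreover have "((\<lambda>d. a d * zeta s) has_sum K * zeta s) P" by (rule has_sum_cmult_left[OF aK])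
  ultimately have TK: "T = K * zeta s" by (rule has_sum_unique)
  define g where "g = (\<lambda>(n,d). a d / (of_nat (n div d)::complex) powr s)"
  have "(f has_sum T) (Sigma P (\<lambda>_. P)) = (g has_sum T) (Sigma P (\<lambda>n. {d. d dvd n}))"
  proof (rule has_sum_reindex_bij_witness[where j = "\<lambda>(d,m). (d*m, d)" and i = "\<lambda>(n,d). (d, n div d)"])
    show "(\<lambda>(n, d). (d, n div d)) ((\<lambda>(d, m). (d * m, d)) x) = x" if "x \<in> Sigma P (\<lambda>_. P)" for x
      using that by (auto simp: P_def)
    show "(\<lambda>(d, m). (d * m, d)) x \<in> Sigma P (\<lambda>n. {d. d dvd n})" if "x \<in> Sigma P (\<lambda>_. P)" for x
      using that by (auto simp: P_def)
    show "(\<lambda>(d, m). (d * m, d)) ((\<lambda>(n, d). (d, n div d)) y) = y" if "y \<in> Sigma P (\<lambda>n. {d. d dvd n})" for y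
      using that by (auto simp: P_def)
    show "(\<lambda>(n, d). (d, n div d)) y \<in> Sigma P (\<lambda>_. P)" if "y \<in> Sigma P (\<lambda>n. {d. d dvd n})" for y
      using that by (auto simp: P_def intro!: Nat.gr0I elim!: dvdE)
    show "g ((\<lambda>(d, m). (d * m, d)) x) = f x" if "x \<in> Sigma P (\<lambda>_. P)" for x
      using that by (auto simp: P_def f_def g_def)
  qed simp
  with T have gT: "(g has_sum T) (Sigma P (\<lambda>n. {d. d dvd n}))" by simp
  have "((\<lambda>n. \<Sum>d\<in>{d. d dvd n}. a d / of_nat (n div d) powr s) has_sum T) P"
  proof (rule has_sum_Sigma'[OF gT])
    fix n assume "n \<in> P"
    then have "finite {d. d dvd n}" by (auto simp: P_def intro: finite_divisors_nat)
    then show "((\<lambda>d. g (n, d)) has_sum (\<Sum>d\<in>{d. d dvd n}. a d / of_nat (n div d) powr s)) {d. d dvd n}"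
      unfolding g_def by simp
  qed
  then show ?thesis using TK unfolding P_def K_def by simp
qed


lemma zeta_near_1:
  assumes s: "Re s \<ge> 3"
  shows "norm (zeta s - 1) \<le> 1/2"
proof -
  define f where "f = (\<lambda>n. 1 / (of_nat (Suc n)::complex) powr s)"
  have s1: "Re s > 1" using s by simp
  have sn: "summable (\<lambda>n. norm (f n))" unfolding f_def by (rule summable_inv_powr[OF s1])
  have sf: "summable f" using sn by (rule summable_norm_cancel)
  have sn': "summable (\<lambda>n. norm (f (Suc n)))" using sn by (subst summable_Suc_iff)
  have "zeta s - 1 = (\<Sum>n. f (Suc n))"
    using suminf_split_head[OF sf] unfolding zeta_def f_def by simp
  also have "norm \<dots> \<le> (\<Sum>n. norm (f (Suc n)))" by (rule summable_norm[OF sn'])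
  also have "\<dots> \<le> 1/2"
  proof (rule suminf_le_const[OF sn'])
    fix N
    have "(\<Sum>n<N. norm (f (Suc n))) = (\<Sum>n<N. real (Suc (Suc n)) powr (- Re s))"
      unfolding f_def by (intro sum.cong refl, subst norm_inv_powr) auto
    also have "\<dots> = (\<Sum>k\<in>(\<lambda>n. Suc (Suc n)) ` {..<N}. real k powr (- Re s))"
      by (subst sum.reindex) (auto simp: inj_on_def)
    also have "\<dots> \<le> (\<Sum>k\<in>{2..Suc N}. real k powr (- Re s))"
      by (intro sum_mono2) auto
    also have "\<dots> \<le> 1/2" by (rule tail_bound[OF s])
    finally show "(\<Sum>n<N. norm (f (Suc n))) \<le> 1/2" .
  qed
  finally show ?thesis .
qed

theorem theorem1:
  fixes x :: complex
  shows "\<exists>\<sigma>::real. \<forall>s::complex. Re s > \<sigma> \<longrightarrow>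
           summable (\<lambda>n. norm (kappa x (Suc n) / of_nat (Suc n) powr s)) \<and>
           (\<Sum>n. kappa x (Suc n) / of_nat (Suc n) powr s) = zeta (s - x) / (2 - zeta s)"
proof -
  define A where "A = max 3 (Re x + 1)"
  have A3: "A \<ge> 3" and Ax: "A \<ge> Re x + 1" unfolding A_def by auto
  show ?thesis
  proof (intro exI[of _ "A + 1"] allI impI)
    fix s :: complex assume s: "Re s > A + 1"
    define a where "a = (\<lambda>n. kappa x n / (of_nat n::complex) powr s)"
    have abound: "norm (a n) \<le> real n powr (A - Re s)" if "n > 0" for n
    proof -
      have "norm (a n) = norm (kappa x n) / real n powr Re s"
        unfolding a_def using that by (simp add: norm_divide norm_nat_powr)
      also have "\<dots> \<le> real n powr A / real n powr Re s"
        by (intro divide_right_mono kappa_bound A3 Ax that) simp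
      also have "\<dots> = real n powr (A - Re s)" by (simp add: powr_diff)
      finally show ?thesis .
    qed
    have asum: "summable (\<lambda>n. norm (a (Suc n)))"
    proof (rule summable_comparison_test)
      have "summable (\<lambda>n. real n powr (A - Re s))" using s by (subst summable_real_powr_iff) simp
      then show "summable (\<lambda>n. real (Suc n) powr (A - Re s))" by (subst summable_Suc_iff)
      show "\<exists>N. \<forall>n\<ge>N. norm (norm (a (Suc n))) \<le> real (Suc n) powr (A - Re s)"
        by (intro exI[of _ 0] allI impI) (simp del: of_nat_Suc add: abound)
    qed
    define K where "K = (\<Sum>n. a (Suc n))"
    have s1: "Re s > 1" using s A3 by simp
    have sx: "Re (s - x) > 1" using s Ax by simp
    have D: "((\<lambda>n. \<Sum>d\<in>{d. d dvd n}. a d / of_nat (n div d) powr s) has_sum (K * zeta s)) {0<..}"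
      unfolding K_def by (rule dirichlet_mult[OF asum s1])
    have pt: "(\<Sum>d\<in>{d. d dvd n}. a d / of_nat (n div d) powr s) = 2 * a n - 1 / of_nat n powr (s - x)"
      if n: "n \<in> {0<..}" for n
    proof -
      have n0: "n > 0" using n by simp
      have "(\<Sum>d\<in>{d. d dvd n}. a d / of_nat (n div d) powr s) = (\<Sum>d\<in>{d. d dvd n}. kappa x d / of_nat n powr s)"
      proof (intro sum.cong refl)
        fix d assume "d \<in> {d. d dvd n}"
        then have dn: "d dvd n" by simp
        then have d0: "d > 0" using n0 by (auto intro: Nat.gr0I)
        have q0: "n div d > 0" using dn n0 by (metis div_by_0 dvd_div_eq_0_iff gr0I)
        have "(of_nat n :: complex) powr s = of_nat d powr s * of_nat (n div d) powr s"
          using dn by (metis dvd_mult_div_cancel nat_powr_mult)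
        moreover have "(of_nat d :: complex) powr s \<noteq> 0" "(of_nat (n div d) :: complex) powr s \<noteq> 0"
          using d0 q0 by auto
        ultimately show "a d / of_nat (n div d) powr s = kappa x d / of_nat n powr s"
          unfolding a_def by (simp add: field_simps)
      qed
      also have "\<dots> = (\<Sum>d\<in>{d. d dvd n}. kappa x d) / of_nat n powr s"
        by (simp add: sum_divide_distrib)
      also have "(\<Sum>d\<in>{d. d dvd n}. kappa x d) = kappa x n + (\<Sum>d\<in>{d\<in>{..<n}. d dvd n}. kappa x d)"
      proof -
        have "{d. d dvd n} = insert n {d\<in>{..<n}. d dvd n}"
          using n0 by (auto dest: dvd_imp_le simp: le_less)
        moreover have "finite {d\<in>{..<n}. d dvd n}" by simp
        ultimately show ?thesis by simp
      qed
      also have "(\<Sum>d\<in>{d\<in>{..<n}. d dvd n}. kappa x d) = kappa x n - of_nat n powr x"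
        using kappa_eq[OF n0, of x] by simp
      finally have "(\<Sum>d\<in>{d. d dvd n}. a d / of_nat (n div d) powr s) = (2 * kappa x n - of_nat n powr x) / of_nat n powr s"
        by simp
      also have "\<dots> = 2 * a n - 1 / of_nat n powr (s - x)"
        unfolding a_def using n0 by (simp add: powr_diff field_simps)
      finally show ?thesis .
    qed
    have aK: "(a has_sum K) {0<..}" unfolding K_def by (rule has_sum_from_Suc[OF asum])
    have "((\<lambda>n. 2 * a n + - (1 / (of_nat n::complex) powr (s - x))) has_sum (2 * K + - zeta (s - x))) {0<..}"
      by (intro has_sum_add has_sum_cmult_right aK has_sum_uminus[THEN iffD2]) (simp add: zeta_has_sum[OF sx])
    then have "((\<lambda>n. \<Sum>d\<in>{d. d dvd n}. a d / of_nat (n div d) powr s) has_sum (2 * K - zeta (s - x))) {0<..}"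
      by (subst has_sum_cong[where g = "\<lambda>n. 2 * a n + - (1 / (of_nat n::complex) powr (s - x))"]) (auto simp: pt)
    with D have eq: "K * zeta s = 2 * K - zeta (s - x)" by (rule has_sum_unique)
    have "zeta s \<noteq> 2"
    proof
      assume "zeta s = 2"
      then show False using zeta_near_1[of s] s A3 by simp
    qed
    then have "2 - zeta s \<noteq> 0" by simp
    then have "K = zeta (s - x) / (2 - zeta s)" using eq by (simp add: field_simps)
    then show "summable (\<lambda>n. norm (kappa x (Suc n) / of_nat (Suc n) powr s)) \<and>
           (\<Sum>n. kappa x (Suc n) / of_nat (Suc n) powr s) = zeta (s - x) / (2 - zeta s)"
      using asum unfolding K_def a_def by simp
  qed
qed

end
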